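(* Let $(\mathcal C,\otimes,I)$ be a closed monoidal category and $M$ a strong monad on $\mathcal C$. For every Eilenberg--Moore $M$-monoid of the shape $\langle MA,\mu_A,m,u\rangle$ (a Kleisli monoid), the morphism $\Lambda(m): MA\to(MA\Rightarrow MA)$ (i) is a morphism of Eilenberg--Moore $M$-monoids $\langle MA,\mu_A,m,u\rangle\to\langle MA\Rightarrow MA,\ \Lambda(p),\ \mathsf{comp},\ \mathsf{ident}\rangle$, and (ii) is a split monomorphism in $\mathcal C$, i.e. there is $r:(MA\Rightarrow MA)\to MA$ with $r\circ\Lambda(m)=\mathrm{id}_{MA}$.
   Context: Closed means each $(-)\otimes B$ has a right adjoint $B\Rightarrow(-)$; $\Lambda:\mathcal C(X\otimes B,C)\cong\mathcal C(X,B\Rightarrow C)$ is currying and $\mathsf{app}:(B\Rightarrow C)\otimes B\to C$ the counit. $\mathsf{comp}=\Lambda(\mathsf{app}\circ(\mathrm{id}\otimes\mathsf{app})\circ\cong): (MA\Rightarrow MA)\otimes(MA\Rightarrow MA)\to(MA\Rightarrow MA)$ (with $\cong$ the associator), $\mathsf{ident}=\Lambda(I\otimes MA\xrightarrow{\cong}MA)$, and $p=\mu_A\circ M\mathsf{app}\circ\tau: M(MA\Rightarrow MA)\otimes MA\to MA$, where $\tau_{X,Y}: MX\otimes Y\to M(X\otimes Y)$ is the strength of $M$. An Eilenberg--Moore $M$-monoid is $\langle E,a,m,u\rangle$ with $\langle E,a\rangle$ an Eilenberg--Moore $M$-algebra, $\langle E,m,u\rangle$ a monoid in $\mathcal C$,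 and $m\circ(a\otimes\mathrm{id}_E)=a\circ Mm\circ\tau_{E,E}$; a morphism of such is a $\mathcal C$-morphism that is both an $M$-algebra morphism and a monoid morphism. *)

theory Defs
  imports Main
begin

text \<open>Objects have type 'o, morphisms type 'm; hom X Y is the set of morphisms X \<rightarrow> Y.
cmp g f is the composite g \<circ> f (for f : X \<rightarrow> Y, g : Y \<rightarrow> Z).
tob / tar: tensor on objects / morphisms; unit: the unit object I;
assoc X Y Z : (X\<otimes>Y)\<otimes>Z \<rightarrow> X\<otimes>(Y\<otimes>Z); lu X : I\<otimes>X \<rightarrow> X; ru X : X\<otimes>I \<rightarrow> X;
ex B C is the internal hom B \<Rightarrow> C, app B C : (B \<Rightarrow> C)\<otimes>B \<rightarrow> C;
mo / ma: the monad on objects / morphisms; eta, mu: unit and multiplication;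
str X Y : M X \<otimes> Y \<rightarrow> M (X\<otimes>Y) the strength.\<close>

record ('o, 'm) smc =
  hom   :: "'o \<Rightarrow> 'o \<Rightarrow> 'm set"
  cmp   :: "'m \<Rightarrow> 'm \<Rightarrow> 'm"
  idm   :: "'o \<Rightarrow> 'm"
  tob   :: "'o \<Rightarrow> 'o \<Rightarrow> 'o"
  tar   :: "'m \<Rightarrow> 'm \<Rightarrow> 'm"
  unit  :: "'o"
  assoc :: "'o \<Rightarrow> 'o \<Rightarrow> 'o \<Rightarrow> 'm"
  lu    :: "'o \<Rightarrow> 'm"
  ru    :: "'o \<Rightarrow> 'm"
  ex    :: "'o \<Rightarrow> 'o \<Rightarrow> 'o"
  app   :: "'o \<Rightarrow> 'o \<Rightarrow> 'm"
  mo    :: "'o \<Rightarrow> 'o"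
  ma    :: "'m \<Rightarrow> 'm"
  eta   :: "'o \<Rightarrow> 'm"
  mu    :: "'o \<Rightarrow> 'm"
  str   :: "'o \<Rightarrow> 'o \<Rightarrow> 'm"

definition is_iso :: "('o,'m) smc \<Rightarrow> 'o \<Rightarrow> 'o \<Rightarrow> 'm \<Rightarrow> bool" where
  "is_iso S X Y f \<longleftrightarrow> f \<in> hom S X Y \<and>
     (\<exists>g \<in> hom S Y X. cmp S g f = idm S X \<and> cmp S f g = idm S Y)"

definition category :: "('o,'m) smc \<Rightarrow> bool" where
  "category S \<longleftrightarrow>
     (\<forall>X. idm S X \<in> hom S X X) \<and>
     (\<forall>X Y Z f g. f \<in> hom S X Y \<longrightarrow> g \<in> hom S Y Z \<longrightarrow> cmp S g f \<in> hom S X Z) \<and>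
     (\<forall>X Y f. f \<in> hom S X Y \<longrightarrow> cmp S (idm S Y) f = f \<and> cmp S f (idm S X) = f) \<and>
     (\<forall>W X Y Z f g h. f \<in> hom S W X \<longrightarrow> g \<in> hom S X Y \<longrightarrow> h \<in> hom S Y Z \<longrightarrow>
        cmp S h (cmp S g f) = cmp S (cmp S h g) f)"

definition monoidal_category :: "('o,'m) smc \<Rightarrow> bool" where
  "monoidal_category S \<longleftrightarrow> category S \<and>
     \<comment> \<open>tensor is a bifunctor\<close>
     (\<forall>X Y X' Y' f g. f \<in> hom S X Y \<longrightarrow> g \<in> hom S X' Y' \<longrightarrow>
        tar S f g \<in> hom S (tob S X X') (tob S Y Y')) \<and>
     (\<forall>X Y. tar S (idm S X) (idm S Y) = idm S (tob S X Y)) \<and>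
     (\<forall>X Y Z X' Y' Z' f g f' g'. f \<in> hom S X Y \<longrightarrow> g \<in> hom S Y Z \<longrightarrow>
        f' \<in> hom S X' Y' \<longrightarrow> g' \<in> hom S Y' Z' \<longrightarrow>
        tar S (cmp S g f) (cmp S g' f') = cmp S (tar S g g') (tar S f f')) \<and>
     \<comment> \<open>associator and unitors: natural isomorphisms\<close>
     (\<forall>X Y Z. is_iso S (tob S (tob S X Y) Z) (tob S X (tob S Y Z)) (assoc S X Y Z)) \<and>
     (\<forall>X. is_iso S (tob S (unit S) X) X (lu S X)) \<and>
     (\<forall>X. is_iso S (tob S X (unit S)) X (ru S X)) \<and>
     (\<forall>X Y Z X' Y' Z' f g h. f \<in> hom S X X' \<longrightarrow> g \<in> hom S Y Y' \<longrightarrow> h \<in> hom S Z Z' \<longrightarrow>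
        cmp S (assoc S X' Y' Z') (tar S (tar S f g) h) =
        cmp S (tar S f (tar S g h)) (assoc S X Y Z)) \<and>
     (\<forall>X Y f. f \<in> hom S X Y \<longrightarrow>
        cmp S f (lu S X) = cmp S (lu S Y) (tar S (idm S (unit S)) f)) \<and>
     (\<forall>X Y f. f \<in> hom S X Y \<longrightarrow>
        cmp S f (ru S X) = cmp S (ru S Y) (tar S f (idm S (unit S)))) \<and>
     \<comment> \<open>pentagon\<close>
     (\<forall>W X Y Z.
        cmp S (assoc S W X (tob S Y Z)) (assoc S (tob S W X) Y Z) =
        cmp S (tar S (idm S W) (assoc S X Y Z))
          (cmp S (assoc S W (tob S X Y) Z) (tar S (assoc S W X Y) (idm S Z)))) \<and>
     \<comment> \<open>triangle\<close>
     (\<forall>X Y. cmp S (tar S (idm S X) (lu S Y)) (assoc S X (unit S) Y) =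
        tar S (ru S X) (idm S Y))"

definition closed_monoidal_category :: "('o,'m) smc \<Rightarrow> bool" where
  "closed_monoidal_category S \<longleftrightarrow> monoidal_category S \<and>
     (\<forall>B C. app S B C \<in> hom S (tob S (ex S B C) B) C) \<and>
     (\<forall>X B C f. f \<in> hom S (tob S X B) C \<longrightarrow>
        (\<exists>!g. g \<in> hom S X (ex S B C) \<and> cmp S (app S B C) (tar S g (idm S B)) = f))"

definition Lam :: "('o,'m) smc \<Rightarrow> 'o \<Rightarrow> 'o \<Rightarrow> 'o \<Rightarrow> 'm \<Rightarrow> 'm" where
  "Lam S X B C f = (THE g. g \<in> hom S X (ex S B C) \<and> cmp S (app S B C) (tar S g (idm S B)) = f)"

definition strong_monad :: "('o,'m) smc \<Rightarrow> bool" where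
  "strong_monad S \<longleftrightarrow>
     \<comment> \<open>M is a functor\<close>
     (\<forall>X Y f. f \<in> hom S X Y \<longrightarrow> ma S f \<in> hom S (mo S X) (mo S Y)) \<and>
     (\<forall>X. ma S (idm S X) = idm S (mo S X)) \<and>
     (\<forall>X Y Z f g. f \<in> hom S X Y \<longrightarrow> g \<in> hom S Y Z \<longrightarrow>
        ma S (cmp S g f) = cmp S (ma S g) (ma S f)) \<and>
     \<comment> \<open>unit and multiplication: natural transformations\<close>
     (\<forall>X. eta S X \<in> hom S X (mo S X)) \<and>
     (\<forall>X. mu S X \<in> hom S (mo S (mo S X)) (mo S X)) \<and>
     (\<forall>X Y f. f \<in> hom S X Y \<longrightarrow> cmp S (eta S Y) f = cmp S (ma S f) (eta S X)) \<and>
     (\<forall>X Y f. f \<in> hom S X Y \<longrightarrow>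
        cmp S (mu S Y) (ma S (ma S f)) = cmp S (ma S f) (mu S X)) \<and>
     \<comment> \<open>monad laws\<close>
     (\<forall>X. cmp S (mu S X) (eta S (mo S X)) = idm S (mo S X)) \<and>
     (\<forall>X. cmp S (mu S X) (ma S (eta S X)) = idm S (mo S X)) \<and>
     (\<forall>X. cmp S (mu S X) (ma S (mu S X)) = cmp S (mu S X) (mu S (mo S X))) \<and>
     \<comment> \<open>strength \<tau>_{X,Y} : M X \<otimes> Y \<rightarrow> M (X \<otimes> Y), natural in X and Y\<close>
     (\<forall>X Y. str S X Y \<in> hom S (tob S (mo S X) Y) (mo S (tob S X Y))) \<and>
     (\<forall>X Y X' Y' f g. f \<in> hom S X X' \<longrightarrow> g \<in> hom S Y Y' \<longrightarrow>
        cmp S (str S X' Y') (tar S (ma S f) g) = cmp S (ma S (tar S f g)) (str S X Y)) \<and>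
     \<comment> \<open>strength coherence with the unitor, associator, unit and multiplication\<close>
     (\<forall>X. cmp S (ma S (ru S X)) (str S X (unit S)) = ru S (mo S X)) \<and>
     (\<forall>X Y Z. cmp S (str S X (tob S Y Z)) (assoc S (mo S X) Y Z) =
        cmp S (ma S (assoc S X Y Z)) (cmp S (str S (tob S X Y) Z) (tar S (str S X Y) (idm S Z)))) \<and>
     (\<forall>X Y. cmp S (str S X Y) (tar S (eta S X) (idm S Y)) = eta S (tob S X Y)) \<and>
     (\<forall>X Y. cmp S (str S X Y) (tar S (mu S X) (idm S Y)) =
        cmp S (mu S (tob S X Y)) (cmp S (ma S (str S X Y)) (str S (mo S X) Y)))"

definition EM_algebra :: "('o,'m) smc \<Rightarrow> 'o \<Rightarrow> 'm \<Rightarrow> bool" where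
  "EM_algebra S E a \<longleftrightarrow> a \<in> hom S (mo S E) E \<and>
     cmp S a (eta S E) = idm S E \<and> cmp S a (ma S a) = cmp S a (mu S E)"

definition monoid_obj :: "('o,'m) smc \<Rightarrow> 'o \<Rightarrow> 'm \<Rightarrow> 'm \<Rightarrow> bool" where
  "monoid_obj S E m u \<longleftrightarrow> m \<in> hom S (tob S E E) E \<and> u \<in> hom S (unit S) E \<and>
     cmp S m (tar S m (idm S E)) = cmp S m (cmp S (tar S (idm S E) m) (assoc S E E E)) \<and>
     cmp S m (tar S u (idm S E)) = lu S E \<and>
     cmp S m (tar S (idm S E) u) = ru S E"

definition EM_monoid :: "('o,'m) smc \<Rightarrow> 'o \<Rightarrow> 'm \<Rightarrow> 'm \<Rightarrow> 'm \<Rightarrow> bool" where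
  "EM_monoid S E a m u \<longleftrightarrow> EM_algebra S E a \<and> monoid_obj S E m u \<and>
     cmp S m (tar S a (idm S E)) = cmp S a (cmp S (ma S m) (str S E E))"

definition EM_monoid_hom :: "('o,'m) smc \<Rightarrow> 'o \<Rightarrow> 'm \<Rightarrow> 'm \<Rightarrow> 'm \<Rightarrow>
     'o \<Rightarrow> 'm \<Rightarrow> 'm \<Rightarrow> 'm \<Rightarrow> 'm \<Rightarrow> bool" where
  "EM_monoid_hom S E a m u E' a' m' u' h \<longleftrightarrow>
     EM_monoid S E a m u \<and> EM_monoid S E' a' m' u' \<and> h \<in> hom S E E' \<and>
     cmp S h a = cmp S a' (ma S h) \<and>
     cmp S h m = cmp S m' (tar S h h) \<and>
     cmp S h u = u'"

definition endo :: "('o,'m) smc \<Rightarrow> 'o \<Rightarrow> 'o" where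
  "endo S A = ex S (mo S A) (mo S A)"

definition comp_endo :: "('o,'m) smc \<Rightarrow> 'o \<Rightarrow> 'm" where
  "comp_endo S A = Lam S (tob S (endo S A) (endo S A)) (mo S A) (mo S A)
     (cmp S (app S (mo S A) (mo S A))
        (cmp S (tar S (idm S (endo S A)) (app S (mo S A) (mo S A)))
           (assoc S (endo S A) (endo S A) (mo S A))))"

definition ident_endo :: "('o,'m) smc \<Rightarrow> 'o \<Rightarrow> 'm" where
  "ident_endo S A = Lam S (unit S) (mo S A) (mo S A) (lu S (mo S A))"

definition p_endo :: "('o,'m) smc \<Rightarrow> 'o \<Rightarrow> 'm" where
  "p_endo S A = cmp S (mu S A) (cmp S (ma S (app S (mo S A) (mo S A))) (str S (endo S A) (mo S A)))"

end

theory Submission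
  imports Defs
begin

locale K =
  fixes S :: "('o,'m) smc" and A :: 'o and m u :: 'm
  assumes cmc: "closed_monoidal_category S" and sm: "strong_monad S"
    and emm: "EM_monoid S (mo S A) (mu S A) m u"
begin

abbreviation tb (infixl "\<otimes>" 70) where "X \<otimes> Y \<equiv> tob S X Y"
abbreviation tr (infixl "\<odot>" 70) where "f \<odot> g \<equiv> tar S f g"
abbreviation "E \<equiv> mo S A"
abbreviation "N \<equiv> ex S E E"
abbreviation "I \<equiv> unit S"
abbreviation "ev \<equiv> app S E E"
abbreviation "ii \<equiv> idm S"
abbreviation "M \<equiv> mo S"
abbreviation "Ma \<equiv> ma S"
abbreviation "al \<equiv> assoc S"

definition cc :: "'o \<Rightarrow> 'm \<Rightarrow> 'm \<Rightarrow> 'm" where "cc Y g f = cmp S g f"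
definition into where "into f Y \<longleftrightarrow> (\<exists>X. f \<in> hom S X Y)"
definition outof where "outof f X \<longleftrightarrow> (\<exists>Y. f \<in> hom S X Y)"

lemma hom_into[simp]: "f \<in> hom S X Y \<Longrightarrow> into f Y" unfolding into_def by blast
lemma hom_outof[simp]: "f \<in> hom S X Y \<Longrightarrow> outof f X" unfolding outof_def by blast

lemmas MC = cmc[unfolded closed_monoidal_category_def]
lemma mon: "monoidal_category S" using MC by (rule conjunct1)
lemmas MO = mon[unfolded monoidal_category_def]
lemma cat: "category S" using MO by (rule conjunct1)
lemmas CA = cat[unfolded category_def]
lemmas SM = sm[unfolded strong_monad_def]

lemma idm_hom[simp]: "ii X \<in> hom S X X" using CA by blast
lemma cmp_hom: "f \<in> hom S X Y \<Longrightarrow> g \<in> hom S Y Z \<Longrightarrow> cmp S g f \<in> hom S X Z"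
  using CA by blast
lemma cmp_assoc0: "f \<in> hom S W X \<Longrightarrow> g \<in> hom S X Y \<Longrightarrow> h \<in> hom S Y Z \<Longrightarrow> cmp S h (cmp S g f) = cmp S (cmp S h g) f"
  using CA by blast
lemma cmp_id0: "f \<in> hom S X Y \<Longrightarrow> cmp S (ii Y) f = f \<and> cmp S f (ii X) = f"
  using CA by blast
lemma cc_hom[simp]: "f \<in> hom S X Y \<Longrightarrow> g \<in> hom S Y Z \<Longrightarrow> cc Y g f \<in> hom S X Z"
  unfolding cc_def by (rule cmp_hom)
lemma into_cc[simp]: "into f Y \<Longrightarrow> g \<in> hom S Y Z \<Longrightarrow> into (cc Y g f) Z"
  unfolding into_def by (meson cc_hom)
lemma outof_cc[simp]: "f \<in> hom S X Y \<Longrightarrow> outof g Y \<Longrightarrow> outof (cc Y g f) X"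
  unfolding outof_def by (meson cc_hom)
lemma into_idm[simp]: "into (ii X) X" unfolding into_def by (meson idm_hom)
lemma outof_idm[simp]: "outof (ii X) X" unfolding outof_def by (meson idm_hom)

lemma cc_assoc[simp]: "into f X \<Longrightarrow> g \<in> hom S X Y \<Longrightarrow> outof h Y \<Longrightarrow> cc X (cc Y h g) f = cc Y h (cc X g f)"
  unfolding into_def outof_def cc_def using CA by metis
lemma cc_idl[simp]: "into f X \<Longrightarrow> cc X (ii X) f = f"
  unfolding into_def cc_def using CA by metis
lemma cc_idr[simp]: "outof f X \<Longrightarrow> cc X f (ii X) = f"
  unfolding outof_def cc_def using CA by metis

lemma tar_hom[simp]: "f \<in> hom S X Y \<Longrightarrow> g \<in> hom S X' Y' \<Longrightarrow> f \<odot> g \<in> hom S (X \<otimes> X') (Y \<otimes> Y')"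
  using MO[THEN conjunct2, THEN conjunct1] by blast
lemma into_tar[simp]: "into f Y \<Longrightarrow> into g Y' \<Longrightarrow> into (f \<odot> g) (Y \<otimes> Y')"
  unfolding into_def by (meson tar_hom)
lemma outof_tar[simp]: "outof f Y \<Longrightarrow> outof g Y' \<Longrightarrow> outof (f \<odot> g) (Y \<otimes> Y')"
  unfolding outof_def by (meson tar_hom)
lemma tar_id[simp]: "ii X \<odot> ii Y = ii (X \<otimes> Y)"
  using MO[THEN conjunct2, THEN conjunct2, THEN conjunct1] by blast
lemma tar_cmp: "f \<in> hom S X Y \<Longrightarrow> g \<in> hom S Y Z \<Longrightarrow> f' \<in> hom S X' Y' \<Longrightarrow> g' \<in> hom S Y' Z' \<Longrightarrow>
   tar S (cmp S g f) (cmp S g' f') = cmp S (tar S g g') (tar S f f')"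
  using MO[THEN conjunct2, THEN conjunct2, THEN conjunct2, THEN conjunct1] by blast
lemma tar_merge[simp]: "into f Y \<Longrightarrow> outof g Y \<Longrightarrow> into f' Y' \<Longrightarrow> outof g' Y' \<Longrightarrow>
   cc (Y \<otimes> Y') (g \<odot> g') (f \<odot> f') = (cc Y g f) \<odot> (cc Y' g' f')"
  unfolding into_def outof_def cc_def using tar_cmp by metis

lemma W1: "cc Y g f = h \<Longrightarrow> f \<in> hom S X Y \<Longrightarrow> outof g Y \<Longrightarrow> into k X \<Longrightarrow> cc Y g (cc X f k) = cc X h k"
  by (metis cc_assoc hom_outof)
lemma W2: "cc Y g f = cc Y' g' f' \<Longrightarrow> f \<in> hom S X Y \<Longrightarrow> f' \<in> hom S X Y' \<Longrightarrow> outof g Y \<Longrightarrow> outof g' Y' \<Longrightarrow> into k X \<Longrightarrow>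
   cc Y g (cc X f k) = cc Y' g' (cc X f' k)"
  by (metis cc_assoc)

lemma tar_merge_w[simp]: "into k X \<Longrightarrow> f \<odot> f' \<in> hom S X (Y \<otimes> Y') \<Longrightarrow> outof g Y \<Longrightarrow> outof g' Y' \<Longrightarrow>
   into f Y \<Longrightarrow> into f' Y' \<Longrightarrow>
   cc (Y \<otimes> Y') (g \<odot> g') (cc X (f \<odot> f') k) = cc X ((cc Y g f) \<odot> (cc Y' g' f')) k"
  by (rule W1) (simp_all)

lemma ma_hom[simp]: "f \<in> hom S X Y \<Longrightarrow> Ma f \<in> hom S (M X) (M Y)"
  using SM[THEN conjunct1] by blast
lemma into_ma[simp]: "into f Y \<Longrightarrow> into (Ma f) (M Y)" unfolding into_def by (meson ma_hom)
lemma outof_ma[simp]: "outof f Y \<Longrightarrow> outof (Ma f) (M Y)" unfolding outof_def by (meson ma_hom)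
lemma ma_id[simp]: "Ma (ii X) = ii (M X)"
  using SM[THEN conjunct2, THEN conjunct1] by blast
lemma ma_cmp: "f \<in> hom S X Y \<Longrightarrow> g \<in> hom S Y Z \<Longrightarrow> Ma (cmp S g f) = cmp S (Ma g) (Ma f)"
  using SM[THEN conjunct2, THEN conjunct2, THEN conjunct1] by blast
lemma ma_merge[simp]: "into f Y \<Longrightarrow> outof g Y \<Longrightarrow> cc (M Y) (Ma g) (Ma f) = Ma (cc Y g f)"
  unfolding into_def outof_def cc_def using ma_cmp by metis
lemma ma_merge_w[simp]: "into k X \<Longrightarrow> Ma f \<in> hom S X (M Y) \<Longrightarrow> outof g Y \<Longrightarrow> into f Y \<Longrightarrow>
   cc (M Y) (Ma g) (cc X (Ma f) k) = cc X (Ma (cc Y g f)) k"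
  by (rule W1) simp_all
lemma eta_hom[simp]: "eta S X \<in> hom S X (M X)"
  using SM[THEN conjunct2, THEN conjunct2, THEN conjunct2, THEN conjunct1] by blast
lemma mu_hom[simp]: "mu S X \<in> hom S (M (M X)) (M X)"
  using SM[THEN conjunct2, THEN conjunct2, THEN conjunct2, THEN conjunct2, THEN conjunct1] by blast
lemma eta_nat0: "f \<in> hom S X Y \<Longrightarrow> cmp S (eta S Y) f = cmp S (Ma f) (eta S X)"
  using SM[THEN conjunct2, THEN conjunct2, THEN conjunct2, THEN conjunct2, THEN conjunct2, THEN conjunct1] by blast
lemma mu_nat0: "f \<in> hom S X Y \<Longrightarrow> cmp S (mu S Y) (Ma (Ma f)) = cmp S (Ma f) (mu S X)"
  using SM[THEN conjunct2, THEN conjunct2, THEN conjunct2, THEN conjunct2, THEN conjunct2, THEN conjunct2, THEN conjunct1] by blast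
lemma mu_eta0: "cmp S (mu S X) (eta S (M X)) = ii (M X)"
  using SM[THEN conjunct2, THEN conjunct2, THEN conjunct2, THEN conjunct2, THEN conjunct2, THEN conjunct2, THEN conjunct2, THEN conjunct1] by blast
lemma mu_Meta0: "cmp S (mu S X) (Ma (eta S X)) = ii (M X)"
  using SM[THEN conjunct2, THEN conjunct2, THEN conjunct2, THEN conjunct2, THEN conjunct2, THEN conjunct2, THEN conjunct2, THEN conjunct2, THEN conjunct1] by blast
lemma mu_mu0: "cmp S (mu S X) (Ma (mu S X)) = cmp S (mu S X) (mu S (M X))"
  using SM[THEN conjunct2, THEN conjunct2, THEN conjunct2, THEN conjunct2, THEN conjunct2, THEN conjunct2, THEN conjunct2, THEN conjunct2, THEN conjunct2, THEN conjunct1] by blast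
lemmas SM10 = SM[THEN conjunct2, THEN conjunct2, THEN conjunct2, THEN conjunct2, THEN conjunct2, THEN conjunct2, THEN conjunct2, THEN conjunct2, THEN conjunct2, THEN conjunct2]
lemma str_hom[simp]: "str S X Y \<in> hom S (M X \<otimes> Y) (M (X \<otimes> Y))"
  using SM10[THEN conjunct1] by blast
lemma str_nat0: "f \<in> hom S X X' \<Longrightarrow> g \<in> hom S Y Y' \<Longrightarrow>
        cmp S (str S X' Y') (tar S (ma S f) g) = cmp S (ma S (tar S f g)) (str S X Y)"
  using SM10[THEN conjunct2, THEN conjunct1] by blast
lemma str_assoc0: "cmp S (str S X (Y \<otimes> Z)) (assoc S (M X) Y Z) =
        cmp S (Ma (assoc S X Y Z)) (cmp S (str S (X \<otimes> Y) Z) (tar S (str S X Y) (ii Z)))"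
  using SM10[THEN conjunct2, THEN conjunct2, THEN conjunct2, THEN conjunct1] by blast
lemma str_eta0: "cmp S (str S X Y) (tar S (eta S X) (ii Y)) = eta S (X \<otimes> Y)"
  using SM10[THEN conjunct2, THEN conjunct2, THEN conjunct2, THEN conjunct2, THEN conjunct1] by blast
lemma str_mu0: "cmp S (str S X Y) (tar S (mu S X) (ii Y)) =
        cmp S (mu S (X \<otimes> Y)) (cmp S (Ma (str S X Y)) (str S (M X) Y))"
  using SM10[THEN conjunct2, THEN conjunct2, THEN conjunct2, THEN conjunct2, THEN conjunct2] by blast

lemma into_eta[simp]: "into (eta S X) (M X)" by (rule hom_into[OF eta_hom])
lemma outof_eta[simp]: "outof (eta S X) X" by (rule hom_outof[OF eta_hom])
lemma into_mu[simp]: "into (mu S X) (M X)" by (rule hom_into[OF mu_hom])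
lemma outof_mu[simp]: "outof (mu S X) (M (M X))" by (rule hom_outof[OF mu_hom])
lemma into_str[simp]: "into (str S X Y) (M (X \<otimes> Y))" by (rule hom_into[OF str_hom])
lemma outof_str[simp]: "outof (str S X Y) (M X \<otimes> Y)" by (rule hom_outof[OF str_hom])

lemmas MO4 = MO[THEN conjunct2, THEN conjunct2, THEN conjunct2, THEN conjunct2]
lemma al_iso: "is_iso S ((X \<otimes> Y) \<otimes> Z) (X \<otimes> (Y \<otimes> Z)) (al X Y Z)" using MO4[THEN conjunct1] by blast
lemma lu_iso: "is_iso S (I \<otimes> X) X (lu S X)" using MO4[THEN conjunct2, THEN conjunct1] by blast
lemma ru_iso: "is_iso S (X \<otimes> I) X (ru S X)" using MO4[THEN conjunct2, THEN conjunct2, THEN conjunct1] by blast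
lemma al_nat0: "f \<in> hom S X X' \<Longrightarrow> g \<in> hom S Y Y' \<Longrightarrow> h \<in> hom S Z Z' \<Longrightarrow>
        cmp S (al X' Y' Z') ((f \<odot> g) \<odot> h) = cmp S (f \<odot> (g \<odot> h)) (al X Y Z)"
  using MO4[THEN conjunct2, THEN conjunct2, THEN conjunct2, THEN conjunct1] by blast
lemma lu_nat0: "f \<in> hom S X Y \<Longrightarrow> cmp S f (lu S X) = cmp S (lu S Y) (ii I \<odot> f)"
  using MO4[THEN conjunct2, THEN conjunct2, THEN conjunct2, THEN conjunct2, THEN conjunct1] by blast
lemma ru_nat0: "f \<in> hom S X Y \<Longrightarrow> cmp S f (ru S X) = cmp S (ru S Y) (f \<odot> ii I)"
  using MO4[THEN conjunct2, THEN conjunct2, THEN conjunct2, THEN conjunct2, THEN conjunct2, THEN conjunct1] by blast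
lemma pent0: "cmp S (al W X (Y \<otimes> Z)) (al (W \<otimes> X) Y Z) =
        cmp S (ii W \<odot> al X Y Z) (cmp S (al W (X \<otimes> Y) Z) (al W X Y \<odot> ii Z))"
  using MO4[THEN conjunct2, THEN conjunct2, THEN conjunct2, THEN conjunct2, THEN conjunct2, THEN conjunct2, THEN conjunct1] by blast
lemma tri0: "cmp S (ii X \<odot> lu S Y) (al X I Y) = ru S X \<odot> ii Y"
  using MO4[THEN conjunct2, THEN conjunct2, THEN conjunct2, THEN conjunct2, THEN conjunct2, THEN conjunct2, THEN conjunct2] by blast

lemma iso_hom: "is_iso S X Y f \<Longrightarrow> f \<in> hom S X Y" unfolding is_iso_def by blast
lemma al_hom[simp]: "al X Y Z \<in> hom S ((X \<otimes> Y) \<otimes> Z) (X \<otimes> (Y \<otimes> Z))" by (rule iso_hom[OF al_iso])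
lemma lu_hom[simp]: "lu S X \<in> hom S (I \<otimes> X) X" by (rule iso_hom[OF lu_iso])
lemma ru_hom[simp]: "ru S X \<in> hom S (X \<otimes> I) X" by (rule iso_hom[OF ru_iso])
lemma into_al[simp]: "into (al X Y Z) (X \<otimes> (Y \<otimes> Z))" by (rule hom_into[OF al_hom])
lemma outof_al[simp]: "outof (al X Y Z) ((X \<otimes> Y) \<otimes> Z)" by (rule hom_outof[OF al_hom])
lemma into_lu[simp]: "into (lu S X) X" by (rule hom_into[OF lu_hom])
lemma outof_lu[simp]: "outof (lu S X) (I \<otimes> X)" by (rule hom_outof[OF lu_hom])
lemma into_ru[simp]: "into (ru S X) X" by (rule hom_into[OF ru_hom])
lemma outof_ru[simp]: "outof (ru S X) (X \<otimes> I)" by (rule hom_outof[OF ru_hom])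

lemma iso_cancel: "is_iso S X Y f \<Longrightarrow> a \<in> hom S Y Z \<Longrightarrow> b \<in> hom S Y Z \<Longrightarrow> cc Y a f = cc Y b f \<Longrightarrow> a = b"
proof -
  assume i: "is_iso S X Y f" and a: "a \<in> hom S Y Z" and b: "b \<in> hom S Y Z" and e: "cc Y a f = cc Y b f"
  from i obtain g where g: "g \<in> hom S Y X" "cmp S f g = ii Y" "f \<in> hom S X Y" unfolding is_iso_def by blast
  have "a = cmp S a (cmp S f g)" using g a cmp_id0 by metis
  also have "\<dots> = cmp S (cmp S a f) g" using g a cmp_assoc0 by metis
  also have "\<dots> = cmp S (cmp S b f) g" using e by (simp add: cc_def)
  also have "\<dots> = cmp S b (cmp S f g)" using g b cmp_assoc0 by metis
  also have "\<dots> = b" using g b cmp_id0 by metis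
  finally show ?thesis .
qed

lemma iso_tar_id: "is_iso S X Y f \<Longrightarrow> is_iso S (X \<otimes> Z) (Y \<otimes> Z) (f \<odot> ii Z)"
proof -
  assume i: "is_iso S X Y f"
  from i obtain g where g: "g \<in> hom S Y X" "cmp S f g = ii Y" "cmp S g f = ii X" "f \<in> hom S X Y" unfolding is_iso_def by blast
  have "cmp S (g \<odot> ii Z) (f \<odot> ii Z) = ii (X \<otimes> Z)"
    using g by (metis tar_cmp idm_hom CA tar_id)
  moreover have "cmp S (f \<odot> ii Z) (g \<odot> ii Z) = ii (Y \<otimes> Z)"
    using g by (metis tar_cmp idm_hom CA tar_id)
  ultimately show ?thesis using g unfolding is_iso_def by (metis tar_hom idm_hom)
qed

lemma app_hom[simp]: "app S B C \<in> hom S (ex S B C \<otimes> B) C" using MC[THEN conjunct2, THEN conjunct1] by blast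
lemma into_app[simp]: "into (app S B C) C" by (rule hom_into[OF app_hom])
lemma outof_app[simp]: "outof (app S B C) (ex S B C \<otimes> B)" by (rule hom_outof[OF app_hom])
lemma univ: "f \<in> hom S (X \<otimes> B) C \<Longrightarrow>
        (\<exists>!g. g \<in> hom S X (ex S B C) \<and> cmp S (app S B C) (tar S g (idm S B)) = f)"
  using MC[THEN conjunct2, THEN conjunct2] by blast
lemma Lam_prop: "f \<in> hom S (X \<otimes> B) C \<Longrightarrow> Lam S X B C f \<in> hom S X (ex S B C) \<and>
    cmp S (app S B C) (tar S (Lam S X B C f) (idm S B)) = f"
  unfolding Lam_def by (rule theI', erule univ)
lemma Lam_hom[simp]: "f \<in> hom S (X \<otimes> B) C \<Longrightarrow> Lam S X B C f \<in> hom S X (ex S B C)"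
  using Lam_prop by blast
lemma into_Lam[simp]: "f \<in> hom S (X \<otimes> B) C \<Longrightarrow> into (Lam S X B C f) (ex S B C)" by (rule hom_into[OF Lam_hom])
lemma outof_Lam[simp]: "f \<in> hom S (X \<otimes> B) C \<Longrightarrow> outof (Lam S X B C f) X" by (rule hom_outof[OF Lam_hom])
lemma Lam_ev: "f \<in> hom S (X \<otimes> B) C \<Longrightarrow> cc (ex S B C \<otimes> B) (app S B C) (Lam S X B C f \<odot> ii B) = f"
  unfolding cc_def using Lam_prop by blast
lemma Lam_uniq: "g \<in> hom S X (ex S B C) \<Longrightarrow> cc (ex S B C \<otimes> B) (app S B C) (g \<odot> ii B) = f \<Longrightarrow> Lam S X B C f = g"
proof -
  assume g: "g \<in> hom S X (ex S B C)" and e: "cc (ex S B C \<otimes> B) (app S B C) (g \<odot> ii B) = f"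
  have f: "f \<in> hom S (X \<otimes> B) C" using e g by (metis cc_hom tar_hom idm_hom app_hom)
  show ?thesis using univ[OF f] Lam_prop[OF f] g e unfolding cc_def by blast
qed
lemma Lam_ext: "g1 \<in> hom S X (ex S B C) \<Longrightarrow> g2 \<in> hom S X (ex S B C) \<Longrightarrow>
   cc (ex S B C \<otimes> B) (app S B C) (g1 \<odot> ii B) = cc (ex S B C \<otimes> B) (app S B C) (g2 \<odot> ii B) \<Longrightarrow> g1 = g2"
  by (metis Lam_uniq)

lemma ev1[simp]: "f \<in> hom S (Y \<otimes> B) C \<Longrightarrow> into k B \<Longrightarrow>
   cc (ex S B C \<otimes> B) (app S B C) (Lam S Y B C f \<odot> k) = cc (Y \<otimes> B) f (ii Y \<odot> k)"
proof -
  assume f: "f \<in> hom S (Y \<otimes> B) C" and k: "into k B"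
  have e: "Lam S Y B C f \<odot> k = cc (Y \<otimes> B) (Lam S Y B C f \<odot> ii B) (ii Y \<odot> k)" using f k by simp
  have "cc (ex S B C \<otimes> B) (app S B C) (cc (Y \<otimes> B) (Lam S Y B C f \<odot> ii B) (ii Y \<odot> k)) = cc (Y \<otimes> B) f (ii Y \<odot> k)"
    by (rule W1[OF Lam_ev[OF f]]) (use f k in \<open>simp_all\<close>)
  then show ?thesis by (simp only: e)
qed
lemma ev2[simp]: "f \<in> hom S (Y \<otimes> B) C \<Longrightarrow> into h Y \<Longrightarrow> into k B \<Longrightarrow>
   cc (ex S B C \<otimes> B) (app S B C) (cc Y (Lam S Y B C f) h \<odot> k) = cc (Y \<otimes> B) f (h \<odot> k)"
proof -
  assume f: "f \<in> hom S (Y \<otimes> B) C" and h: "into h Y" and k: "into k B"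
  have e: "cc Y (Lam S Y B C f) h \<odot> k = cc (Y \<otimes> B) (Lam S Y B C f \<odot> ii B) (h \<odot> k)" using f h k by simp
  have "cc (ex S B C \<otimes> B) (app S B C) (cc (Y \<otimes> B) (Lam S Y B C f \<odot> ii B) (h \<odot> k)) = cc (Y \<otimes> B) f (h \<odot> k)"
    by (rule W1[OF Lam_ev[OF f]]) (use f h k in \<open>simp_all\<close>)
  then show ?thesis by (simp only: e)
qed
lemma ev1w[simp]: "f \<in> hom S (Y \<otimes> B) C \<Longrightarrow> k \<in> hom S Z B \<Longrightarrow> into q (Y \<otimes> Z) \<Longrightarrow>
   cc (ex S B C \<otimes> B) (app S B C) (cc (Y \<otimes> Z) (Lam S Y B C f \<odot> k) q) = cc (Y \<otimes> B) f (cc (Y \<otimes> Z) (ii Y \<odot> k) q)"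
  by (rule W2) (simp_all add: hom_into)
lemma ev2w[simp]: "f \<in> hom S (Y \<otimes> B) C \<Longrightarrow> h \<in> hom S X Y \<Longrightarrow> k \<in> hom S Z B \<Longrightarrow> into q (X \<otimes> Z) \<Longrightarrow>
   cc (ex S B C \<otimes> B) (app S B C) (cc (X \<otimes> Z) (cc Y (Lam S Y B C f) h \<odot> k) q) = cc (Y \<otimes> B) f (cc (X \<otimes> Z) (h \<odot> k) q)"
  by (rule W2) (simp_all add: hom_into)



lemma al_nat: "f \<in> hom S X X' \<Longrightarrow> g \<in> hom S Y Y' \<Longrightarrow> h \<in> hom S Z Z' \<Longrightarrow>
   cc ((X' \<otimes> Y') \<otimes> Z') (al X' Y' Z') ((f \<odot> g) \<odot> h) = cc (X \<otimes> (Y \<otimes> Z)) (f \<odot> (g \<odot> h)) (al X Y Z)"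
  unfolding cc_def by (rule al_nat0)
lemma lu_nat: "f \<in> hom S X Y \<Longrightarrow> cc (I \<otimes> Y) (lu S Y) (ii I \<odot> f) = cc X f (lu S X)"
  unfolding cc_def by (rule lu_nat0[symmetric])
lemma ru_nat: "f \<in> hom S X Y \<Longrightarrow> cc (Y \<otimes> I) (ru S Y) (f \<odot> ii I) = cc X f (ru S X)"
  unfolding cc_def by (rule ru_nat0[symmetric])
lemma pent: "cc ((W \<otimes> X) \<otimes> (Y \<otimes> Z)) (al W X (Y \<otimes> Z)) (al (W \<otimes> X) Y Z) =
        cc (W \<otimes> ((X \<otimes> Y) \<otimes> Z)) (ii W \<odot> al X Y Z) (cc ((W \<otimes> (X \<otimes> Y)) \<otimes> Z) (al W (X \<otimes> Y) Z) (al W X Y \<odot> ii Z))"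
  unfolding cc_def by (rule pent0)
lemma tri: "cc (X \<otimes> (I \<otimes> Y)) (ii X \<odot> lu S Y) (al X I Y) = ru S X \<odot> ii Y"
  unfolding cc_def by (rule tri0)
lemma eta_nat: "f \<in> hom S X Y \<Longrightarrow> cc (M X) (Ma f) (eta S X) = cc Y (eta S Y) f"
  unfolding cc_def by (rule eta_nat0[symmetric])
lemma mu_nat: "f \<in> hom S X Y \<Longrightarrow> cc (M X) (Ma f) (mu S X) = cc (M (M Y)) (mu S Y) (Ma (Ma f))"
  unfolding cc_def by (rule mu_nat0[symmetric])
lemma mu_eta[simp]: "cc (M (M X)) (mu S X) (eta S (M X)) = ii (M X)"
  unfolding cc_def by (rule mu_eta0)
lemma mu_mu: "cc (M (M X)) (mu S X) (mu S (M X)) = cc (M (M X)) (mu S X) (Ma (mu S X))"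
  unfolding cc_def by (rule mu_mu0[symmetric])
lemma str_nat: "f \<in> hom S X X' \<Longrightarrow> g \<in> hom S Y Y' \<Longrightarrow>
        cc (M X' \<otimes> Y') (str S X' Y') (Ma f \<odot> g) = cc (M (X \<otimes> Y)) (Ma (f \<odot> g)) (str S X Y)"
  unfolding cc_def by (rule str_nat0)
lemma str_assoc: "cc (M X \<otimes> (Y \<otimes> Z)) (str S X (Y \<otimes> Z)) (al (M X) Y Z) =
        cc (M ((X \<otimes> Y) \<otimes> Z)) (Ma (al X Y Z)) (cc (M (X \<otimes> Y) \<otimes> Z) (str S (X \<otimes> Y) Z) (str S X Y \<odot> ii Z))"
  unfolding cc_def by (rule str_assoc0)
lemma str_eta: "cc (M X \<otimes> Y) (str S X Y) (eta S X \<odot> ii Y) = eta S (X \<otimes> Y)"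
  unfolding cc_def by (rule str_eta0)
lemma str_mu: "cc (M X \<otimes> Y) (str S X Y) (mu S X \<odot> ii Y) =
        cc (M (M (X \<otimes> Y))) (mu S (X \<otimes> Y)) (cc (M (M X \<otimes> Y)) (Ma (str S X Y)) (str S (M X) Y))"
  unfolding cc_def by (rule str_mu0)

lemmas EMM = emm[unfolded EM_monoid_def EM_algebra_def monoid_obj_def]
lemma m_hom[simp]: "m \<in> hom S (E \<otimes> E) E" using EMM by blast
lemma u_hom[simp]: "u \<in> hom S I E" using EMM by blast
lemma into_m[simp]: "into m E" by (rule hom_into[OF m_hom])
lemma outof_m[simp]: "outof m (E \<otimes> E)" by (rule hom_outof[OF m_hom])
lemma into_u[simp]: "into u E" by (rule hom_into[OF u_hom])
lemma outof_u[simp]: "outof u I" by (rule hom_outof[OF u_hom])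
lemma mA: "cc (E \<otimes> E) m (m \<odot> ii E) = cc (E \<otimes> E) m (cc (E \<otimes> (E \<otimes> E)) (ii E \<odot> m) (al E E E))"
  using EMM unfolding cc_def by blast
lemma mL: "cc (E \<otimes> E) m (u \<odot> ii E) = lu S E" using EMM unfolding cc_def by blast
lemma mR: "cc (E \<otimes> E) m (ii E \<odot> u) = ru S E" using EMM unfolding cc_def by blast
lemma mC: "cc (E \<otimes> E) m (mu S A \<odot> ii E) = cc (M E) (mu S A) (cc (M (E \<otimes> E)) (Ma m) (str S E E))"
  using EMM unfolding cc_def by blast

abbreviation "p \<equiv> cc (M E) (mu S A) (cc (M (N \<otimes> E)) (Ma ev) (str S N E))"
abbreviation "c \<equiv> cc (N \<otimes> E) ev (cc (N \<otimes> (N \<otimes> E)) (ii N \<odot> ev) (al N N E))"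
abbreviation "Lm \<equiv> Lam S E E E m"
abbreviation "Lp \<equiv> Lam S (M N) E E p"
abbreviation "Cp \<equiv> Lam S (N \<otimes> N) E E c"
abbreviation "Iu \<equiv> Lam S I E E (lu S E)"

lemma endo_eq: "endo S A = N" by (simp add: endo_def)
lemma p_eq: "p_endo S A = p" by (simp add: p_endo_def endo_def cc_def)
lemma comp_eq: "comp_endo S A = Cp" by (simp add: comp_endo_def endo_def cc_def)
lemma ident_eq: "ident_endo S A = Iu" by (simp add: ident_endo_def endo_def)

lemma p_hom: "p \<in> hom S (M N \<otimes> E) E" by simp
lemma c_hom: "c \<in> hom S ((N \<otimes> N) \<otimes> E) E" by simp

lemma H1: "Lm \<in> hom S E N" by simp
lemma H2: "cc E Lm u = Iu"
  by (rule Lam_ext[where B=E and C=E and X=I]) (simp_all add: mL)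
lemma H3: "cc E Lm m = cc (N \<otimes> N) Cp (Lm \<odot> Lm)"
proof (rule Lam_ext[where B=E and C=E and X="E \<otimes> E"])
  have a: "cc ((N \<otimes> N) \<otimes> E) (al N N E) ((Lm \<odot> Lm) \<odot> ii E) = cc (E \<otimes> (E \<otimes> E)) (Lm \<odot> (Lm \<odot> ii E)) (al E E E)"
    by (rule al_nat) simp_all
  show "cc (N \<otimes> E) ev (cc E Lm m \<odot> ii E) = cc (N \<otimes> E) ev (cc (N \<otimes> N) Cp (Lm \<odot> Lm) \<odot> ii E)"
    by (simp add: a mA)
qed simp_all
lemma H4: "cc E Lm (mu S A) = cc (M N) Lp (Ma Lm)"
proof (rule Lam_ext[where B=E and C=E and X="M E"])
  have a: "cc (M N \<otimes> E) (str S N E) (Ma Lm \<odot> ii E) = cc (M (E \<otimes> E)) (Ma (Lm \<odot> ii E)) (str S E E)"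
    by (rule str_nat) simp_all
  show "cc (N \<otimes> E) ev (cc E Lm (mu S A) \<odot> ii E) = cc (N \<otimes> E) ev (cc (M N) Lp (Ma Lm) \<odot> ii E)"
    by (simp add: a mC)
qed simp_all

lemma T2: "cc (M N) Lp (eta S N) = ii N"
proof (rule Lam_ext[where B=E and C=E and X="N"])
  have a: "cc (M (N \<otimes> E)) (Ma ev) (eta S (N \<otimes> E)) = cc E (eta S E) ev"
    by (rule eta_nat) simp
  show "cc (N \<otimes> E) ev (cc (M N) Lp (eta S N) \<odot> ii E) = cc (N \<otimes> E) ev (ii N \<odot> ii E)"
    by (simp add: str_eta a W1[OF a] W1[OF mu_eta])
qed simp_all

lemma Kelly: "cc (I \<otimes> (Y \<otimes> Z)) (lu S (Y \<otimes> Z)) (al I Y Z) = lu S Y \<odot> ii Z"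
proof -
  let ?Q = "Y \<otimes> Z"
  let ?g = "cc (I \<otimes> (Y \<otimes> Z)) (lu S (Y \<otimes> Z)) (al I Y Z)"
  let ?f = "lu S Y \<odot> ii Z"
  let ?a1 = "al I (I \<otimes> Y) Z"
  let ?a2 = "al I I Y \<odot> ii Z"
  let ?X0 = "cc (I \<otimes> (I \<otimes> ?Q)) (ii I \<odot> lu S ?Q) (cc ((I \<otimes> I) \<otimes> ?Q) (al I I ?Q) (al (I \<otimes> I) Y Z))"
  have s1: "cc (I \<otimes> ((I \<otimes> Y) \<otimes> Z)) (ii I \<odot> ?g) (cc ((I \<otimes> (I \<otimes> Y)) \<otimes> Z) ?a1 ?a2) = ?X0"
    by (simp add: pent)
  have i1: "cc (I \<otimes> ((I \<otimes> Y) \<otimes> Z)) (ii I \<odot> (lu S Y \<odot> ii Z)) ?a1 = cc ((I \<otimes> Y) \<otimes> Z) (al I Y Z) ((ii I \<odot> lu S Y) \<odot> ii Z)"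
    by (rule al_nat[symmetric]) simp_all
  have i2: "cc ((I \<otimes> Y) \<otimes> Z) (al I Y Z) ((ru S I \<odot> ii Y) \<odot> ii Z) = cc ((I \<otimes> I) \<otimes> ?Q) (ru S I \<odot> ii ?Q) (al (I \<otimes> I) Y Z)"
    using al_nat[of "ru S I" "I \<otimes> I" I "ii Y" Y Y "ii Z" Z Z] by simp
  have s2: "cc (I \<otimes> ((I \<otimes> Y) \<otimes> Z)) (ii I \<odot> ?f) (cc ((I \<otimes> (I \<otimes> Y)) \<otimes> Z) ?a1 ?a2) = ?X0"
    by (simp add: i1 W2[OF i1] tri W1[OF tri] i2)
  have s3: "cc ((I \<otimes> (I \<otimes> Y)) \<otimes> Z) (cc (I \<otimes> ((I \<otimes> Y) \<otimes> Z)) (ii I \<odot> ?g) ?a1) ?a2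
      = cc ((I \<otimes> (I \<otimes> Y)) \<otimes> Z) (cc (I \<otimes> ((I \<otimes> Y) \<otimes> Z)) (ii I \<odot> ?f) ?a1) ?a2"
    using s1 s2 by simp
  have s4: "cc (I \<otimes> ((I \<otimes> Y) \<otimes> Z)) (ii I \<odot> ?g) ?a1 = cc (I \<otimes> ((I \<otimes> Y) \<otimes> Z)) (ii I \<odot> ?f) ?a1"
    by (rule iso_cancel[where Z="I \<otimes> (Y \<otimes> Z)", OF iso_tar_id[OF al_iso] _ _ s3]) simp_all
  have s5: "ii I \<odot> ?g = ii I \<odot> ?f"
    by (rule iso_cancel[where Z="I \<otimes> (Y \<otimes> Z)", OF al_iso _ _ s4]) simp_all
  have s6: "cc ((I \<otimes> Y) \<otimes> Z) ?g (lu S ((I \<otimes> Y) \<otimes> Z)) = cc ((I \<otimes> Y) \<otimes> Z) ?f (lu S ((I \<otimes> Y) \<otimes> Z))"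
    using lu_nat[of ?g "(I \<otimes> Y) \<otimes> Z" ?Q] lu_nat[of ?f "(I \<otimes> Y) \<otimes> Z" ?Q] s5 by simp
  show ?thesis
    by (rule iso_cancel[where Z="Y \<otimes> Z", OF lu_iso _ _ s6]) simp_all
qed

definition rinv where "rinv X = (SOME g. g \<in> hom S X (X \<otimes> I) \<and> cmp S (ru S X) g = ii X \<and> cmp S g (ru S X) = ii (X \<otimes> I))"
lemma rinv: "rinv X \<in> hom S X (X \<otimes> I) \<and> cmp S (ru S X) (rinv X) = ii X \<and> cmp S (rinv X) (ru S X) = ii (X \<otimes> I)"
  unfolding rinv_def by (rule someI_ex) (use ru_iso in \<open>auto simp: is_iso_def\<close>)
lemma rinv_hom[simp]: "rinv X \<in> hom S X (X \<otimes> I)" using rinv by blast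
lemma into_rinv[simp]: "into (rinv X) (X \<otimes> I)" by (rule hom_into[OF rinv_hom])
lemma outof_rinv[simp]: "outof (rinv X) X" by (rule hom_outof[OF rinv_hom])
lemma rinv1[simp]: "cc (X \<otimes> I) (ru S X) (rinv X) = ii X" using rinv unfolding cc_def by blast
lemma rinv2[simp]: "cc X (rinv X) (ru S X) = ii (X \<otimes> I)" using rinv unfolding cc_def by blast

abbreviation "rr \<equiv> cc (N \<otimes> E) ev (cc (N \<otimes> I) (ii N \<odot> u) (rinv N))"
lemma split: "cc N rr Lm = ii E"
proof -
  have a: "cc E Lm (ru S E) = cc (N \<otimes> I) (ru S N) (Lm \<odot> ii I)" by (rule ru_nat[symmetric]) simp
  have e: "cc E (cc N (rinv N) Lm) (ru S E) = cc E (cc (E \<otimes> I) (Lm \<odot> ii I) (rinv E)) (ru S E)"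
    by (simp add: a W1[OF a] W1[OF rinv2] W1[OF rinv1])
  have k: "cc N (rinv N) Lm = cc (E \<otimes> I) (Lm \<odot> ii I) (rinv E)"
    by (rule iso_cancel[where Z="N \<otimes> I", OF ru_iso _ _ e]) simp_all
  show ?thesis by (simp add: k W1[OF mR])
qed
lemma rr_hom: "rr \<in> hom S N E" by simp

lemma T3: "cc (M N) Lp (Ma Lp) = cc (M N) Lp (mu S N)"
proof (rule Lam_ext[where B=E and C=E and X="M (M N)"])
  have a: "cc (M N \<otimes> E) (str S N E) (Ma Lp \<odot> ii E) = cc (M (M N \<otimes> E)) (Ma (Lp \<odot> ii E)) (str S (M N) E)"
    by (rule str_nat) simp_all
  have b: "cc (M (N \<otimes> E)) (Ma ev) (mu S (N \<otimes> E)) = cc (M (M E)) (mu S E) (Ma (Ma ev))"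
    by (rule mu_nat) simp
  show "cc (N \<otimes> E) ev (cc (M N) Lp (Ma Lp) \<odot> ii E) = cc (N \<otimes> E) ev (cc (M N) Lp (mu S N) \<odot> ii E)"
    by (simp add: a str_mu b W2[OF b] mu_mu W2[OF mu_mu])
qed simp_all

lemma T4a: "cc (N \<otimes> N) Cp (Cp \<odot> ii N) = cc (N \<otimes> N) Cp (cc (N \<otimes> (N \<otimes> N)) (ii N \<odot> Cp) (al N N N))"
proof (rule Lam_ext[where B=E and C=E and X="(N \<otimes> N) \<otimes> N"])
  have a: "cc ((N \<otimes> N) \<otimes> E) (al N N E) ((Cp \<odot> ii N) \<odot> ii E) = cc ((N \<otimes> N) \<otimes> (N \<otimes> E)) (Cp \<odot> ii (N \<otimes> E)) (al (N \<otimes> N) N E)"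
    using al_nat[of Cp "N \<otimes> N" N "ii N" N N "ii E" E E] by simp
  have b: "cc ((N \<otimes> N) \<otimes> E) (al N N E) (ii (N \<otimes> N) \<odot> ev) = cc (N \<otimes> (N \<otimes> (N \<otimes> E))) (ii N \<odot> (ii N \<odot> ev)) (al N N (N \<otimes> E))"
    using al_nat[of "ii N" N N "ii N" N N ev "N \<otimes> E" E] by simp
  have c: "cc ((N \<otimes> N) \<otimes> E) (al N N E) (cc (N \<otimes> (N \<otimes> N)) (ii N \<odot> Cp) (al N N N) \<odot> ii E)
      = cc (N \<otimes> ((N \<otimes> N) \<otimes> E)) (ii N \<odot> (Cp \<odot> ii E)) (cc ((N \<otimes> (N \<otimes> N)) \<otimes> E) (al N (N \<otimes> N) E) (al N N N \<odot> ii E))"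
  proof -
    have c1: "cc (N \<otimes> (N \<otimes> N)) (ii N \<odot> Cp) (al N N N) \<odot> ii E = cc ((N \<otimes> (N \<otimes> N)) \<otimes> E) ((ii N \<odot> Cp) \<odot> ii E) (al N N N \<odot> ii E)"
      by simp
    have c2: "cc ((N \<otimes> N) \<otimes> E) (al N N E) ((ii N \<odot> Cp) \<odot> ii E) = cc (N \<otimes> ((N \<otimes> N) \<otimes> E)) (ii N \<odot> (Cp \<odot> ii E)) (al N (N \<otimes> N) E)"
      by (rule al_nat) simp_all
    show ?thesis by (simp only: c1) (rule W2[OF c2]; simp)
  qed
  show "cc (N \<otimes> E) ev (cc (N \<otimes> N) Cp (Cp \<odot> ii N) \<odot> ii E) =
        cc (N \<otimes> E) ev (cc (N \<otimes> N) Cp (cc (N \<otimes> (N \<otimes> N)) (ii N \<odot> Cp) (al N N N)) \<odot> ii E)"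
    by (simp add: a b W2[OF b] pent c)
qed simp_all

lemma T4l: "cc (N \<otimes> N) Cp (Iu \<odot> ii N) = lu S N"
proof (rule Lam_ext[where B=E and C=E and X="I \<otimes> N"])
  have a: "cc ((N \<otimes> N) \<otimes> E) (al N N E) ((Iu \<odot> ii N) \<odot> ii E) = cc (I \<otimes> (N \<otimes> E)) (Iu \<odot> ii (N \<otimes> E)) (al I N E)"
    using al_nat[of Iu I N "ii N" N N "ii E" E E] by simp
  have b: "cc (I \<otimes> E) (lu S E) (ii I \<odot> ev) = cc (N \<otimes> E) ev (lu S (N \<otimes> E))"
    by (rule lu_nat) simp
  show "cc (N \<otimes> E) ev (cc (N \<otimes> N) Cp (Iu \<odot> ii N) \<odot> ii E) = cc (N \<otimes> E) ev (lu S N \<odot> ii E)"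
    by (simp add: a b W2[OF b] Kelly)
qed simp_all

lemma T4r: "cc (N \<otimes> N) Cp (ii N \<odot> Iu) = ru S N"
proof (rule Lam_ext[where B=E and C=E and X="N \<otimes> I"])
  have a: "cc ((N \<otimes> N) \<otimes> E) (al N N E) ((ii N \<odot> Iu) \<odot> ii E) = cc (N \<otimes> (I \<otimes> E)) (ii N \<odot> (Iu \<odot> ii E)) (al N I E)"
    by (rule al_nat) simp_all
  show "cc (N \<otimes> E) ev (cc (N \<otimes> N) Cp (ii N \<odot> Iu) \<odot> ii E) = cc (N \<otimes> E) ev (ru S N \<odot> ii E)"
    by (simp add: a tri)
qed simp_all

lemma T5: "cc (N \<otimes> N) Cp (Lp \<odot> ii N) = cc (M N) Lp (cc (M (N \<otimes> N)) (Ma Cp) (str S N N))"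
proof (rule Lam_ext[where B=E and C=E and X="M N \<otimes> N"])
  have a: "cc ((N \<otimes> N) \<otimes> E) (al N N E) ((Lp \<odot> ii N) \<odot> ii E) = cc (M N \<otimes> (N \<otimes> E)) (Lp \<odot> ii (N \<otimes> E)) (al (M N) N E)"
    using al_nat[of Lp "M N" N "ii N" N N "ii E" E E] by simp
  have b: "cc (M N \<otimes> E) (str S N E) (ii (M N) \<odot> ev) = cc (M (N \<otimes> (N \<otimes> E))) (Ma (ii N \<odot> ev)) (str S N (N \<otimes> E))"
    using str_nat[of "ii N" N N ev "N \<otimes> E" E] by simp
  have c: "cc (M N \<otimes> E) (str S N E) (cc (M (N \<otimes> N)) (Ma Cp) (str S N N) \<odot> ii E)
     = cc (M ((N \<otimes> N) \<otimes> E)) (Ma (Cp \<odot> ii E)) (cc (M (N \<otimes> N) \<otimes> E) (str S (N \<otimes> N) E) (str S N N \<odot> ii E))"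
  proof -
    have c1: "cc (M (N \<otimes> N)) (Ma Cp) (str S N N) \<odot> ii E = cc (M (N \<otimes> N) \<otimes> E) (Ma Cp \<odot> ii E) (str S N N \<odot> ii E)"
      by simp
    have c2: "cc (M N \<otimes> E) (str S N E) (Ma Cp \<odot> ii E) = cc (M ((N \<otimes> N) \<otimes> E)) (Ma (Cp \<odot> ii E)) (str S (N \<otimes> N) E)"
      by (rule str_nat) simp_all
    show ?thesis by (simp only: c1) (rule W2[OF c2]; simp)
  qed
  show "cc (N \<otimes> E) ev (cc (N \<otimes> N) Cp (Lp \<odot> ii N) \<odot> ii E) =
        cc (N \<otimes> E) ev (cc (M N) Lp (cc (M (N \<otimes> N)) (Ma Cp) (str S N N)) \<odot> ii E)"
    by (simp add: a b W2[OF b] str_assoc c)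
qed simp_all


lemma Lp_hom: "Lp \<in> hom S (M N) N" by simp
lemma Cp_hom: "Cp \<in> hom S (N \<otimes> N) N" by simp
lemma Iu_hom: "Iu \<in> hom S I N" by simp

lemma main: "EM_monoid_hom S E (mu S A) m u
           (endo S A) (Lam S (M (endo S A)) E E (p_endo S A))
           (comp_endo S A) (ident_endo S A) Lm
       \<and> (\<exists>r \<in> hom S (endo S A) E. cmp S r Lm = ii E)"
  unfolding endo_eq p_eq comp_eq ident_eq EM_monoid_hom_def EM_monoid_def EM_algebra_def monoid_obj_def
  using EMM H1 H2 H3 H4 T2 T3 T4a T4l T4r T5 split rr_hom Lp_hom Cp_hom Iu_hom mu_hom[of A] mu_eta0[of A]
  unfolding cc_def by blast

end

theorem theorem16:
  fixes S :: "('o, 'm) smc" and A :: 'o and m u :: 'm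
  assumes "closed_monoidal_category S"
    and "strong_monad S"
    and "EM_monoid S (mo S A) (mu S A) m u"
  shows "EM_monoid_hom S (mo S A) (mu S A) m u
           (endo S A) (Lam S (mo S (endo S A)) (mo S A) (mo S A) (p_endo S A))
           (comp_endo S A) (ident_endo S A)
           (Lam S (mo S A) (mo S A) (mo S A) m)
       \<and> (\<exists>r \<in> hom S (endo S A) (mo S A).
            cmp S r (Lam S (mo S A) (mo S A) (mo S A) m) = idm S (mo S A))"
proof -
  interpret K S A m u using assms by unfold_locales
  show ?thesis by (rule main)
qed

end
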